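(* In the 2SDI setting where Alice measures the qubit observables $A_0=\sigma_x$, $A_1=\sigma_y$ and Bob and Charlie are black boxes, the Svetlichny family $P^V_{SvF}$ demonstrates tripartite steering (i.e. admits no 2SDI fully LHS-LHV model) whenever $V>\frac12$.
   Context: Outcomes and settings: $a,b,c,x,y,z\in\{0,1\}$. For a qubit observable $O$ with eigenvalues $\pm1$, the measurement has projectors $M_0=(\mathbb 1+O)/2$, $M_1=(\mathbb 1-O)/2$; $M^A_{a|x}$ denotes the projectors of $A_x$. Svetlichny family ($0<V\le1$): $P^V_{SvF}(abc|xyz)=\frac{2+(-1)^{a\oplus b\oplus c\oplus xy\oplus yz\oplus xz}\sqrt2\,V}{16}$. 2SDI fully LHS-LHV model: there exist probabilities $q_\lambda$, qubit states $\rho^\lambda_A$ and arbitrary conditional distributions $P_\lambda(b|y)$, $P_\lambda(c|z)$ with $P(abc|xyz)=\sum_\lambda q_\lambda \mathrm{Tr}(M^A_{a|x}\rho^\lambda_A)P_\lambda(b|y)P_\lambda(c|z)$ for all $a,b,c,x,y,z$. A correlation demonstrates tripartite steering in the 2SDI scenario iff it admits no such model. *)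

theory Defs
  imports Complex_Main
begin

text \<open>2x2 complex matrices, indices 0 and 1 (entries outside are irrelevant).\<close>
type_synonym cmat = "nat \<Rightarrow> nat \<Rightarrow> complex"

definition mtrace :: "cmat \<Rightarrow> complex" where
  "mtrace M = (\<Sum>i<2. M i i)"

definition mmult :: "cmat \<Rightarrow> cmat \<Rightarrow> cmat" where
  "mmult A B = (\<lambda>i j. \<Sum>k<2. A i k * B k j)"

definition ident2 :: cmat where
  "ident2 = (\<lambda>i j. if i = j then 1 else 0)"

definition sigma_x :: cmat where
  "sigma_x = (\<lambda>i j. if (i = 0 \<and> j = 1) \<or> (i = 1 \<and> j = 0) then 1 else 0)"

definition sigma_y :: cmat where
  "sigma_y = (\<lambda>i j. if i = 0 \<and> j = 1 then - \<i> else if i = 1 \<and> j = 0 then \<i> else 0)"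

definition qubit_state :: "cmat \<Rightarrow> bool" where
  "qubit_state \<rho> \<longleftrightarrow>
     (\<forall>i<2. \<forall>j<2. \<rho> j i = cnj (\<rho> i j)) \<and>
     (\<forall>v :: nat \<Rightarrow> complex. 0 \<le> Re (\<Sum>i<2. \<Sum>j<2. cnj (v i) * \<rho> i j * v j)) \<and>
     mtrace \<rho> = 1"

definition proj :: "cmat \<Rightarrow> nat \<Rightarrow> cmat" where
  "proj Obs a = (\<lambda>i j. (ident2 i j + (-1) ^ a * Obs i j) / 2)"

definition alice_obs :: "nat \<Rightarrow> cmat" where
  "alice_obs x = (if x = 0 then sigma_x else sigma_y)"

definition P_SvF :: "real \<Rightarrow> nat \<Rightarrow> nat \<Rightarrow> nat \<Rightarrow> nat \<Rightarrow> nat \<Rightarrow> nat \<Rightarrow> real" where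
  "P_SvF V a b c x y z =
     (2 + (-1) ^ (a + b + c + x*y + y*z + x*z) * sqrt 2 * V) / 16"

abbreviation bits :: "nat set" where "bits \<equiv> {0, 1}"

definition cond_distr :: "(nat \<Rightarrow> nat \<Rightarrow> real) \<Rightarrow> bool" where
  "cond_distr D \<longleftrightarrow> (\<forall>b\<in>bits. \<forall>y\<in>bits. 0 \<le> D b y) \<and> (\<forall>y\<in>bits. (\<Sum>b\<in>bits. D b y) = 1)"

definition fully_LHS_LHV_2SDI ::
  "(nat \<Rightarrow> cmat) \<Rightarrow> (nat \<Rightarrow> nat \<Rightarrow> nat \<Rightarrow> nat \<Rightarrow> nat \<Rightarrow> nat \<Rightarrow> real) \<Rightarrow> bool" where
  "fully_LHS_LHV_2SDI A P \<longleftrightarrow>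
    (\<exists>(L :: nat set) (q :: nat \<Rightarrow> real) (\<rho> :: nat \<Rightarrow> cmat)
        (PB :: nat \<Rightarrow> nat \<Rightarrow> nat \<Rightarrow> real) (PC :: nat \<Rightarrow> nat \<Rightarrow> nat \<Rightarrow> real).
       finite L \<and> (\<forall>l\<in>L. 0 \<le> q l) \<and> (\<Sum>l\<in>L. q l) = 1 \<and>
       (\<forall>l\<in>L. qubit_state (\<rho> l) \<and> cond_distr (PB l) \<and> cond_distr (PC l)) \<and>
       (\<forall>a\<in>bits. \<forall>b\<in>bits. \<forall>c\<in>bits. \<forall>x\<in>bits. \<forall>y\<in>bits. \<forall>z\<in>bits.
          P a b c x y z =
          (\<Sum>l\<in>L. q l * Re (mtrace (mmult (proj (A x) a) (\<rho> l))) * PB l b y * PC l c z)))"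

end

theory Submission
  imports Defs
begin

definition W :: "(nat \<Rightarrow> nat \<Rightarrow> nat \<Rightarrow> nat \<Rightarrow> nat \<Rightarrow> nat \<Rightarrow> real) \<Rightarrow> real" where
  "W P = (\<Sum>a\<in>bits. \<Sum>b\<in>bits. \<Sum>c\<in>bits. \<Sum>x\<in>bits. \<Sum>y\<in>bits. \<Sum>z\<in>bits.
      (-1) ^ (a + b + c + x*y + y*z + x*z) * P a b c x y z)"

lemma W_add: "W (\<lambda>a b c x y z. f a b c x y z + g a b c x y z) = W f + W g"
  unfolding W_def by (simp add: algebra_simps sum.distrib)

lemma W_zero: "W (\<lambda>a b c x y z. 0) = 0"
  unfolding W_def by simp

lemma W_sum: "finite L \<Longrightarrow> W (\<lambda>a b c x y z. \<Sum>l\<in>L. g l a b c x y z) = (\<Sum>l\<in>L. W (g l))"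
proof (induction L rule: finite_induct)
  case empty then show ?case using W_zero by simp
next
  case (insert l L)
  then show ?case using W_add[of "g l" "\<lambda>a b c x y z. \<Sum>l\<in>L. g l a b c x y z"] by simp
qed

lemma W_cong: "(\<And>a b c x y z. a \<in> bits \<Longrightarrow> b \<in> bits \<Longrightarrow> c \<in> bits \<Longrightarrow> x \<in> bits \<Longrightarrow> y \<in> bits \<Longrightarrow> z \<in> bits
   \<Longrightarrow> P a b c x y z = Q a b c x y z) \<Longrightarrow> W P = W Q"
  unfolding W_def by (intro sum.cong refl) auto

lemma W_SvF: "W (P_SvF V) = 4 * sqrt 2 * V"
  unfolding W_def P_SvF_def by (simp add: field_simps)

lemma W_prod: "W (\<lambda>a b c x y z. k * A a x * B b y * C c z) =
   k * (\<Sum>x\<in>bits. \<Sum>y\<in>bits. \<Sum>z\<in>bits. (-1)^(x*y+y*z+x*z) *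
     (A 0 x - A 1 x) * (B 0 y - B 1 y) * (C 0 z - C 1 z))"
  unfolding W_def by (simp add: algebra_simps)


definition tau :: "cmat \<Rightarrow> nat \<Rightarrow> real" where
  "tau r x = (if x = 0 then Re (r 1 0 + r 0 1) else Im (r 1 0) - Im (r 0 1))"

lemma psd_lin:
  assumes "qubit_state r" "c^2 + s^2 = 1"
  shows "0 \<le> 1 + tau r 0 * c + tau r 1 * s"
proof -
  have herm: "\<forall>i<2. \<forall>j<2. r j i = cnj (r i j)" and psd: "\<forall>v :: nat \<Rightarrow> complex. 0 \<le> Re (\<Sum>i<2. \<Sum>j<2. cnj (v i) * r i j * v j)"
    and mt: "mtrace r = 1"
    using assms(1) unfolding qubit_state_def by blast+
  have h: "r 1 0 = cnj (r 0 1)" using herm[rule_format, of 0 1] by simp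
  have h1: "r (Suc 0) 0 = cnj (r 0 (Suc 0))" using h by simp
  have "r 0 0 + r 1 1 = 1" using mt unfolding mtrace_def by (simp add: numeral_2_eq_2)
  then have tr: "Re (r 0 0) + Re (r 1 1) = 1" by (metis one_complex.sel plus_complex.sel(1))
  define v :: "nat \<Rightarrow> complex" where "v = (\<lambda>i. if i = 0 then 1 else Complex c s)"
  have sumeq: "(\<Sum>i<2. \<Sum>j<2. cnj (v i) * r i j * v j) = r 0 0 + r 0 1 * Complex c s + cnj (Complex c s) * r 1 0 + cnj (Complex c s) * r 1 1 * Complex c s"
    by (simp add: v_def numeral_2_eq_2)
  have reeq: "Re (r 0 0 + r 0 1 * Complex c s + cnj (Complex c s) * r 1 0 + cnj (Complex c s) * r 1 1 * Complex c s)
    = Re (r 0 0) + Re (r 1 1) * (c^2+s^2) + 2 * (Re (r 0 1) * c - Im (r 0 1) * s)"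
    by (simp add: h h1 power2_eq_square algebra_simps)
  have "0 \<le> Re (\<Sum>i<2. \<Sum>j<2. cnj (v i) * r i j * v j)" using psd by blast
  then have "0 \<le> Re (r 0 0) + Re (r 1 1) * (c^2+s^2) + 2 * (Re (r 0 1) * c - Im (r 0 1) * s)"
    by (simp only: sumeq reeq)
  then have "0 \<le> 1 + 2 * (Re (r 0 1) * c - Im (r 0 1) * s)" using tr assms(2) by simp
  moreover have "tau r 0 = 2 * Re (r 0 1)" "tau r 1 = - 2 * Im (r 0 1)" by (simp_all add: tau_def h h1)
  ultimately show ?thesis by (simp add: algebra_simps)
qed

lemma psd_bounds:
  assumes "qubit_state r"
  shows "\<bar>tau r 0 + tau r 1\<bar> \<le> sqrt 2" "\<bar>tau r 0 - tau r 1\<bar> \<le> sqrt 2"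
proof -
  define h where "h = sqrt 2 / 2"
  have s2: "h^2 = (1/2::real)" unfolding h_def by (simp add: power_divide)
  have e1: "h^2 + h^2 = 1" "(-h)^2 + (-h)^2 = 1" "h^2 + (-h)^2 = 1" "(-h)^2 + h^2 = 1"
    using s2 by simp_all
  have p1: "0 \<le> 1 + tau r 0 * h + tau r 1 * h" by (rule psd_lin[OF assms e1(1)])
  have p2: "0 \<le> 1 + tau r 0 * (-h) + tau r 1 * (-h)" by (rule psd_lin[OF assms e1(2)])
  have p3: "0 \<le> 1 + tau r 0 * h + tau r 1 * (-h)" by (rule psd_lin[OF assms e1(3)])
  have p4: "0 \<le> 1 + tau r 0 * (-h) + tau r 1 * h" by (rule psd_lin[OF assms e1(4)])
  have q: "sqrt 2 * h = 1" unfolding h_def by simp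
  have hl: "\<And>X Y. 0 \<le> (X::real) \<Longrightarrow> sqrt 2 * X = Y \<Longrightarrow> 0 \<le> Y" by auto
  have "0 \<le> sqrt 2 + (tau r 0 + tau r 1)"
    by (rule hl[OF p1]) (simp add: ring_distribs mult.left_commute[of "sqrt 2"] q)
  moreover have "0 \<le> sqrt 2 - (tau r 0 + tau r 1)"
    by (rule hl[OF p2]) (simp add: ring_distribs mult.left_commute[of "sqrt 2"] q)
  moreover have "0 \<le> sqrt 2 + (tau r 0 - tau r 1)"
    by (rule hl[OF p3]) (simp add: ring_distribs mult.left_commute[of "sqrt 2"] q)
  moreover have "0 \<le> sqrt 2 - (tau r 0 - tau r 1)"
    by (rule hl[OF p4]) (simp add: ring_distribs mult.left_commute[of "sqrt 2"] q)
  ultimately show "\<bar>tau r 0 + tau r 1\<bar> \<le> sqrt 2" "\<bar>tau r 0 - tau r 1\<bar> \<le> sqrt 2" by linarith+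
qed
lemma core_bound:
  fixes t0 t1 b0 b1 g0 g1 :: real
  assumes "\<bar>t0+t1\<bar> \<le> sqrt 2" "\<bar>t0-t1\<bar> \<le> sqrt 2" "\<bar>b0\<bar> \<le> 1" "\<bar>b1\<bar> \<le> 1" "\<bar>g0\<bar> \<le> 1" "\<bar>g1\<bar> \<le> 1"
  shows "(t0+t1)*(b0*g0-b1*g1) + (t0-t1)*(b0*g1+b1*g0) \<le> 2 * sqrt 2"
proof -
  define P where "P = b0*g0-b1*g1"
  define Q where "Q = b0*g1+b1*g0"
  have m: "\<And>b u. \<bar>b\<bar> \<le> 1 \<Longrightarrow> b * u \<le> \<bar>u::real\<bar>" 
    by (metis abs_ge_self abs_mult abs_of_nonneg mult_left_le_one_le abs_ge_zero order_trans)
  have k1: "\<bar>g0+g1\<bar> + \<bar>g0-g1\<bar> \<le> 2" using assms(5,6)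
    by (cases "g0 \<ge> 0"; cases "g1 \<ge> 0"; cases "g0+g1\<ge>0"; cases "g0 - g1 \<ge> 0"; simp)
  have a1: "\<bar>-g0-g1\<bar> = \<bar>g0+g1\<bar>" "\<bar>-g0+g1\<bar> = \<bar>g0-g1\<bar>" by simp_all
  have "P + Q = b0*(g0+g1) + b1*(g0-g1)" by (simp add: P_def Q_def algebra_simps)
  also have "\<dots> \<le> 2" using m[OF assms(3), of "g0+g1"] m[OF assms(4), of "g0-g1"] k1 by linarith
  finally have 1: "P + Q \<le> 2" .
  have "-P - Q = b0*(-g0-g1) + b1*(-g0+g1)" by (simp add: P_def Q_def algebra_simps)
  also have "\<dots> \<le> 2" using m[OF assms(3), of "-g0-g1"] m[OF assms(4), of "-g0+g1"] k1 a1 by linarith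
  finally have 2: "-P - Q \<le> 2" .
  have "P - Q = b0*(g0-g1) + b1*(-g0-g1)" by (simp add: P_def Q_def algebra_simps)
  also have "\<dots> \<le> 2" using m[OF assms(3), of "g0-g1"] m[OF assms(4), of "-g0-g1"] k1 a1 by linarith
  finally have 3: "P - Q \<le> 2" .
  have "Q - P = b0*(-g0+g1) + b1*(g0+g1)" by (simp add: P_def Q_def algebra_simps)
  also have "\<dots> \<le> 2" using m[OF assms(3), of "-g0+g1"] m[OF assms(4), of "g0+g1"] k1 a1 by linarith
  finally have 4: "Q - P \<le> 2" .
  have PQ: "\<bar>P\<bar> + \<bar>Q\<bar> \<le> 2" using 1 2 3 4 by linarith
  have x1: "(t0+t1)*P \<le> sqrt 2 * \<bar>P\<bar>"
    by (metis abs_ge_self abs_mult abs_ge_zero assms(1) mult_right_mono order_trans)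
  have x2: "(t0-t1)*Q \<le> sqrt 2 * \<bar>Q\<bar>"
    by (metis abs_ge_self abs_mult abs_ge_zero assms(2) mult_right_mono order_trans)
  have x3: "sqrt 2 * (\<bar>P\<bar> + \<bar>Q\<bar>) \<le> sqrt 2 * 2" using PQ by (simp add: mult_left_mono)
  have "(t0+t1)*P + (t0-t1)*Q \<le> 2 * sqrt 2" using x1 x2 x3 by (simp add: algebra_simps)
  then show ?thesis by (simp add: P_def Q_def)
qed

lemma sum_bits: "(\<Sum>x\<in>bits. f x) = f (0::nat) + f 1"
  by simp

lemma tr_diff: "x \<in> bits \<Longrightarrow>
  Re (mtrace (mmult (proj (alice_obs x) 0) r)) - Re (mtrace (mmult (proj (alice_obs x) 1) r)) = tau r x"
  by (auto simp: mtrace_def mmult_def proj_def alice_obs_def sigma_x_def sigma_y_def ident2_def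
      tau_def numeral_2_eq_2 lessThan_Suc)

lemma cd_bound: "cond_distr B \<Longrightarrow> y \<in> bits \<Longrightarrow> \<bar>B 0 y - B 1 y\<bar> \<le> 1"
  unfolding cond_distr_def by auto

lemma per_l:
  assumes "qubit_state r" "cond_distr B" "cond_distr C" "0 \<le> k"
  shows "W (\<lambda>a b c x y z. k * Re (mtrace (mmult (proj (alice_obs x) a) r)) * B b y * C c z) \<le> k * (2 * sqrt 2)"
proof -
  have "W (\<lambda>a b c x y z. k * Re (mtrace (mmult (proj (alice_obs x) a) r)) * B b y * C c z)
     = k * ((tau r 0 + tau r 1)*((B 0 0 - B 1 0)*(C 0 0 - C 1 0)-(B 0 1 - B 1 1)*(C 0 1 - C 1 1))
          + (tau r 0 - tau r 1)*((B 0 0 - B 1 0)*(C 0 1 - C 1 1)+(B 0 1 - B 1 1)*(C 0 0 - C 1 0)))"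
  proof -
    have d0: "Re (mtrace (mmult (proj (alice_obs 0) 0) r)) - Re (mtrace (mmult (proj (alice_obs 0) 1) r)) = tau r 0"
      by (rule tr_diff) simp
    have d1: "Re (mtrace (mmult (proj (alice_obs 1) 0) r)) - Re (mtrace (mmult (proj (alice_obs 1) 1) r)) = tau r 1"
      by (rule tr_diff) simp
    have d1': "Re (mtrace (mmult (proj (alice_obs (Suc 0)) 0) r)) - Re (mtrace (mmult (proj (alice_obs (Suc 0)) (Suc 0)) r)) = tau r (Suc 0)"
      using d1 by simp
    show ?thesis unfolding W_prod
      apply (simp only: sum_bits d0 d1)
      apply (simp add: algebra_simps)
      done
  qed
  also have "\<dots> \<le> k * (2 * sqrt 2)"
    by (intro mult_left_mono core_bound psd_bounds assms cd_bound) auto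
  finally show ?thesis .
qed

theorem proposition4:
  fixes V :: real
  assumes "0 < V" and "V \<le> 1" and "V > 1/2"
  shows "\<not> fully_LHS_LHV_2SDI alice_obs (P_SvF V)"
proof
  assume "fully_LHS_LHV_2SDI alice_obs (P_SvF V)"
  then obtain L :: "nat set" and q \<rho> PB PC where fin: "finite L" and qn: "\<forall>l\<in>L. 0 \<le> q l" and qs: "(\<Sum>l\<in>L. q l) = 1"
    and st: "\<forall>l\<in>L. qubit_state (\<rho> l) \<and> cond_distr (PB l) \<and> cond_distr (PC l)"
    and eq: "\<forall>a\<in>bits. \<forall>b\<in>bits. \<forall>c\<in>bits. \<forall>x\<in>bits. \<forall>y\<in>bits. \<forall>z\<in>bits.
          P_SvF V a b c x y z =
          (\<Sum>l\<in>L. q l * Re (mtrace (mmult (proj (alice_obs x) a) (\<rho> l))) * PB l b y * PC l c z)"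
    unfolding fully_LHS_LHV_2SDI_def by blast
  have "4 * sqrt 2 * V = W (P_SvF V)" by (simp add: W_SvF)
  also have "\<dots> = W (\<lambda>a b c x y z. \<Sum>l\<in>L. q l * Re (mtrace (mmult (proj (alice_obs x) a) (\<rho> l))) * PB l b y * PC l c z)"
    by (rule W_cong) (use eq in blast)
  also have "\<dots> = (\<Sum>l\<in>L. W (\<lambda>a b c x y z. q l * Re (mtrace (mmult (proj (alice_obs x) a) (\<rho> l))) * PB l b y * PC l c z))"
    by (rule W_sum[OF fin])
  also have "\<dots> \<le> (\<Sum>l\<in>L. q l * (2 * sqrt 2))"
    by (rule sum_mono) (use st qn per_l in blast)
  also have "\<dots> = 2 * sqrt 2" by (simp add: sum_distrib_right[symmetric] qs)
  finally have "4 * sqrt 2 * V \<le> 2 * sqrt 2" .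
  then have "sqrt 2 * (2 * V) \<le> sqrt 2 * 1" by (simp add: algebra_simps)
  then have "2 * V \<le> 1" by (rule mult_left_le_imp_le) simp
  then show False using assms(3) by simp
qed

end
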